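(* The time evolution operators $\{T_\ell\}_{\ell\ge1}$ of the box-basket-ball system commute with each other: for all integers $k,\ell\ge1$ and every state $S$, $T_kT_\ell(S)=T_\ell T_k(S)$.
   Context: Box-basket-ball system. A site state is a triple $(d,e,f)$ of nonnegative integers with $d=e-f+1$ (one box, $e$ baskets, $f$ balls); $V=(1,0,0)$. A state is a sequence $(S_i)_{i\in\mathbb Z}$ of site states with $S_i=V$ for all but finitely many $i$. The map $R$ sends a carrier $(a,b,c)$ and a site $(d,e,f)$ to a site $(d',e',f')$ and a carrier $(a',b',c')$ with $d'=d+\min(a+b,a+c,b+f)-\min(e+c,d+c,d+b)$, $e'=e+\min(a+b,a+c,b+f)-\min(a+e,d+f,e+f)$, $f'=f+\min(e+c,d+c,d+b)-\min(a+e,d+f,e+f)$, $a'=a-\min(a+b,a+c,b+f)+\min(e+c,d+c,d+b)$, $b'=b-\min(a+b,a+c,b+f)+\min(a+e,d+f,e+f)$, $c'=c-\min(e+c,d+c,d+b)+\min(a+e,d+f,e+f)$. Time evolution $T_\ell$ (integer $\ell\ge1$): a carrier starting in state $u_\ell=(\ell,0,0)$ to the left of all non-vacuum sites passes the sites from left to right, each site being updated by $R$ (the carrier returns to $u_\ell$ after passing sufficiently many vacuum sites at the right); the new state consists of the updated sites. $R$ is the tropicalization of a whurl relation and satisfies the Yang–Baxter relation. *)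

theory Defs
  imports Main
begin

type_synonym triple = "int \<times> int \<times> int"

definition is_site :: "triple \<Rightarrow> bool" where
  "is_site s = (case s of (d, e, f) \<Rightarrow> d \<ge> 0 \<and> e \<ge> 0 \<and> f \<ge> 0 \<and> d = e - f + 1)"

definition vac :: triple where
  "vac = (1, 0, 0)"

definition is_state :: "(int \<Rightarrow> triple) \<Rightarrow> bool" where
  "is_state S = ((\<forall>i. is_site (S i)) \<and> finite {i. S i \<noteq> vac})"

text \<open>The combinatorial R: (carrier, site) maps to (new site, new carrier).\<close>
definition Rmap :: "triple \<Rightarrow> triple \<Rightarrow> triple \<times> triple" where
  "Rmap u s = (case u of (a, b, c) \<Rightarrow> case s of (d, e, f) \<Rightarrow>
     let X = min (min (a + b) (a + c)) (b + f);
         Y = min (min (e + c) (d + c)) (d + b);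
         Z = min (min (a + e) (d + f)) (e + f)
     in ((d + X - Y, e + X - Z, f + Y - Z),
         (a - X + Y, b - X + Z, c - Y + Z)))"

definition carrier0 :: "int \<Rightarrow> triple" where
  "carrier0 l = (l, 0, 0)"

fun carrier_at :: "int \<Rightarrow> (int \<Rightarrow> triple) \<Rightarrow> int \<Rightarrow> nat \<Rightarrow> triple" where
  "carrier_at l S N 0 = carrier0 l"
| "carrier_at l S N (Suc n) = snd (Rmap (carrier_at l S N n) (S (N + int n)))"

definition left_bound :: "(int \<Rightarrow> triple) \<Rightarrow> int" where
  "left_bound S = (SOME N. \<forall>i < N. S i = vac)"

text \<open>Time evolution T_l: the carrier, started in (l,0,0) to the left of all
  non-vacuum sites, passes the sites from left to right, updating each by R.
  (Sites left of the starting point are vacuum and are not changed, since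
  R maps (carrier0 l, vac) to (vac, carrier0 l).)\<close>
definition T :: "int \<Rightarrow> (int \<Rightarrow> triple) \<Rightarrow> (int \<Rightarrow> triple)" where
  "T l S = (let N = left_bound S in
     (\<lambda>i. if i < N then S i else fst (Rmap (carrier_at l S N (nat (i - N))) (S i))))"

end

theory Submission imports Defs begin

definition Tp :: "int \<Rightarrow> int \<Rightarrow> (int \<Rightarrow> triple) \<Rightarrow> (int \<Rightarrow> triple)" where
  "Tp l M S = (\<lambda>i. if i < M then S i else fst (Rmap (carrier_at l S M (nat (i - M))) (S i)))"

lemma R_vac: "l \<ge> 0 \<Longrightarrow> Rmap (carrier0 l) vac = (vac, carrier0 l)"
  by (simp add: Rmap_def carrier0_def vac_def Let_def)

lemma R_00: "k \<ge> 0 \<Longrightarrow> l \<ge> 0 \<Longrightarrow> Rmap (carrier0 k) (carrier0 l) = (carrier0 l, carrier0 k)"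
  by (simp add: Rmap_def carrier0_def Let_def)

lemma carrier_pre:
  assumes "l \<ge> 0" "\<forall>i<M. S i = vac" "M' \<le> M"
  shows "n \<le> nat (M - M') \<Longrightarrow> carrier_at l S M' n = carrier0 l"
proof (induction n)
  case 0 then show ?case by simp
next
  case (Suc n)
  then have "S (M' + int n) = vac" using assms by auto
  with Suc show ?case using R_vac[OF assms(1)] by simp
qed

lemma carrier_shift:
  assumes "l \<ge> 0" "\<forall>i<M. S i = vac" "M' \<le> M"
  shows "carrier_at l S M' (nat (M - M') + n) = carrier_at l S M n"
proof (induction n)
  case 0 then show ?case using carrier_pre[OF assms] by simp
next
  case (Suc n)
  have e: "M' + int (nat (M - M') + n) = M + int n" using assms(3) by simp
  have "carrier_at l S M' (nat (M - M') + Suc n) = snd (Rmap (carrier_at l S M' (nat (M - M') + n)) (S (M' + int (nat (M - M') + n))))"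
    by simp
  also have "\<dots> = snd (Rmap (carrier_at l S M n) (S (M + int n)))" by (simp only: Suc.IH e)
  finally show ?case by simp
qed

lemma Tp_shift:
  assumes "l \<ge> 0" "\<forall>i<M. S i = vac" "M' \<le> M"
  shows "Tp l M' S = Tp l M S"
proof
  fix i
  show "Tp l M' S i = Tp l M S i"
  proof (cases "i < M")
    case True
    then have si: "S i = vac" using assms by auto
    show ?thesis
    proof (cases "i < M'")
      case True then show ?thesis using \<open>i < M\<close> by (simp add: Tp_def)
    next
      case False
      then have "carrier_at l S M' (nat (i - M')) = carrier0 l"
        using carrier_pre[OF assms, of "nat (i - M')"] True by simp
      then show ?thesis using False True si R_vac[OF assms(1)] by (simp add: Tp_def)
    qed
  next
    case False
    then have "nat (i - M') = nat (M - M') + nat (i - M)" using assms(3) by simp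
    then have "carrier_at l S M' (nat (i - M')) = carrier_at l S M (nat (i - M))"
      using carrier_shift[OF assms] by simp
    then show ?thesis using False assms(3) by (simp add: Tp_def)
  qed
qed

definition mc :: "int \<Rightarrow> int \<Rightarrow> int \<Rightarrow> int \<Rightarrow> bool" where
  "mc m p q r \<longleftrightarrow> m \<le> p \<and> m \<le> q \<and> m \<le> r \<and> (m = p \<or> m = q \<or> m = r)"

lemma R_char:
  fixes a b c d e f :: int
  shows
  "\<exists>X Y Z. mc X (a+b) (a+c) (b+f) \<and> mc Y (e+c) (d+c) (d+b) \<and> mc Z (a+e) (d+f) (e+f) \<and>
     Rmap (a,b,c) (d,e,f) = ((d+X-Y, e+X-Z, f+Y-Z),(a-X+Y, b-X+Z, c-Y+Z))"
  by (rule exI[of _ "min (min (a+b) (a+c)) (b+f)"], rule exI[of _ "min (min (e+c) (d+c)) (d+b)"],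
      rule exI[of _ "min (min (a+e) (d+f)) (e+f)"]) (auto simp: mc_def Rmap_def Let_def min_def)

lemma mc_cong: "mc m p q r \<Longrightarrow> p = p' \<Longrightarrow> q = q' \<Longrightarrow> r = r' \<Longrightarrow> mc m p' q' r'"
  by simp

lemma F_s2e:
  fixes a b c d e f g h i Xa Ya Za Xb Zb Xc Yc Zc Xd Yd Zd Xe Ze :: int
  assumes "mc Xa (d + e) (d + f) (e + i)"
  and "mc Ya (f + h) (f + g) (e + g)"
  and "mc Za (d + h) (g + i) (h + i)"
  and "mc Xb (a + b) (a + c) (Ya - Za + b + i)"
  and "mc Zb (Xa - Za + a + h) (Xa - Za + g + i) (Xa + Ya - 2*Za + h + i)"
  and "mc Xc (a + b) (a + c) (b + f)"
  and "mc Yc (c + e) (c + d) (b + d)"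
  and "mc Zc (a + e) (d + f) (e + f)"
  and "mc Xd (-2*Xc + Yc + Zc + a + b) (-Xc + Zc + a + c) (-Xc + Zc + b + i)"
  and "mc Yd (-Yc + Zc + c + h) (-Yc + Zc + c + g) (-Xc + Zc + b + g)"
  and "mc Zd (-Xc + Yc + a + h) (g + i) (h + i)"
  and "mc Xe (2*Xc - Yc - Zc + d + e) (Xc - Zc + d + f) (Xc + Yd - Zc - Zd + e + i)"
  and "mc Ze (Xc + Xd - Yc - Zd + d + h) (Xd - Zd + g + i) (Xd + Yd - 2*Zd + h + i)"
  shows "Xa + Xb - Xd - Xe - Za - Zb + Zd + Ze = 0"
  using assms unfolding mc_def by (smt (z3))

lemma F_s2f:
  fixes a b c d e f g h i Xa Ya Za Yb Zb Xc Yc Zc Xd Yd Zd Ye Ze :: int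
  assumes "mc Xa (d + e) (d + f) (e + i)"
  and "mc Ya (f + h) (f + g) (e + g)"
  and "mc Za (d + h) (g + i) (h + i)"
  and "mc Yb (Xa - Za + c + h) (Xa - Ya + c + g) (Xa - Ya + b + g)"
  and "mc Zb (Xa - Za + a + h) (Xa - Za + g + i) (Xa + Ya - 2*Za + h + i)"
  and "mc Xc (a + b) (a + c) (b + f)"
  and "mc Yc (c + e) (c + d) (b + d)"
  and "mc Zc (a + e) (d + f) (e + f)"
  and "mc Xd (-2*Xc + Yc + Zc + a + b) (-Xc + Zc + a + c) (-Xc + Zc + b + i)"
  and "mc Yd (-Yc + Zc + c + h) (-Yc + Zc + c + g) (-Xc + Zc + b + g)"
  and "mc Zd (-Xc + Yc + a + h) (g + i) (h + i)"
  and "mc Ye (Xd + Yc - Zc - Zd + f + h) (Xd + Yc - Yd - Zc + f + g) (Xc + Xd - Yd - Zc + e + g)"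
  and "mc Ze (Xc + Xd - Yc - Zd + d + h) (Xd - Zd + g + i) (Xd + Yd - 2*Zd + h + i)"
  shows "Ya + Yb - Yd - Ye - Za - Zb + Zd + Ze = 0"
  using assms unfolding mc_def by (smt (z3))

lemma F_we:
  fixes a b c d e f g h i Xa Ya Za Xb Yb Zb Xc Yc Zc Xd Yd Zd Xe Ze Xf Zf :: int
  assumes "mc Xa (d + e) (d + f) (e + i)"
  and "mc Ya (f + h) (f + g) (e + g)"
  and "mc Za (d + h) (g + i) (h + i)"
  and "mc Xb (a + b) (a + c) (Ya - Za + b + i)"
  and "mc Yb (Xa - Za + c + h) (Xa - Ya + c + g) (Xa - Ya + b + g)"
  and "mc Zb (Xa - Za + a + h) (Xa - Za + g + i) (Xa + Ya - 2*Za + h + i)"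
  and "mc Xc (a + b) (a + c) (b + f)"
  and "mc Yc (c + e) (c + d) (b + d)"
  and "mc Zc (a + e) (d + f) (e + f)"
  and "mc Xd (-2*Xc + Yc + Zc + a + b) (-Xc + Zc + a + c) (-Xc + Zc + b + i)"
  and "mc Yd (-Yc + Zc + c + h) (-Yc + Zc + c + g) (-Xc + Zc + b + g)"
  and "mc Zd (-Xc + Yc + a + h) (g + i) (h + i)"
  and "mc Xe (2*Xc - Yc - Zc + d + e) (Xc - Zc + d + f) (Xc + Yd - Zc - Zd + e + i)"
  and "mc Ze (Xc + Xd - Yc - Zd + d + h) (Xd - Zd + g + i) (Xd + Yd - 2*Zd + h + i)"
  and "mc Xf (-2*Xb + Yb + Zb + a + b) (-Xb + Zb + a + c) (-Xb - Ya + Za + Zb + b + f)"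
  and "mc Zf (-Xa - Xb + Yb + Za + a + e) (-Xa + Za + d + f) (-Xa - Ya + 2*Za + e + f)"
  shows "-Xa - Xc + Xe + Xf + Za + Zc - Ze - Zf = 0"
  using assms unfolding mc_def by (smt (z3))

lemma F_wf:
  fixes a b c d e f g h i Xa Ya Za Xb Yb Zb Xc Yc Zc Xd Yd Zd Ye Ze Yf Zf :: int
  assumes "mc Xa (d + e) (d + f) (e + i)"
  and "mc Ya (f + h) (f + g) (e + g)"
  and "mc Za (d + h) (g + i) (h + i)"
  and "mc Xb (a + b) (a + c) (Ya - Za + b + i)"
  and "mc Yb (Xa - Za + c + h) (Xa - Ya + c + g) (Xa - Ya + b + g)"
  and "mc Zb (Xa - Za + a + h) (Xa - Za + g + i) (Xa + Ya - 2*Za + h + i)"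
  and "mc Xc (a + b) (a + c) (b + f)"
  and "mc Yc (c + e) (c + d) (b + d)"
  and "mc Zc (a + e) (d + f) (e + f)"
  and "mc Xd (-2*Xc + Yc + Zc + a + b) (-Xc + Zc + a + c) (-Xc + Zc + b + i)"
  and "mc Yd (-Yc + Zc + c + h) (-Yc + Zc + c + g) (-Xc + Zc + b + g)"
  and "mc Zd (-Xc + Yc + a + h) (g + i) (h + i)"
  and "mc Ye (Xd + Yc - Zc - Zd + f + h) (Xd + Yc - Yd - Zc + f + g) (Xc + Xd - Yd - Zc + e + g)"
  and "mc Ze (Xc + Xd - Yc - Zd + d + h) (Xd - Zd + g + i) (Xd + Yd - 2*Zd + h + i)"
  and "mc Yf (-Xa - Yb + Za + Zb + c + e) (-Xa + Ya - Yb + Zb + c + d) (-Xa - Xb + Ya + Zb + b + d)"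
  and "mc Zf (-Xa - Xb + Yb + Za + a + e) (-Xa + Za + d + f) (-Xa - Ya + 2*Za + e + f)"
  shows "-Ya - Yc + Ye + Yf + Za + Zc - Ze - Zf = 0"
  using assms unfolding mc_def by (smt (z3))

lemma yb_core:
  fixes a b c d e f g h i :: int
  shows "\<exists>s2 u1 v1 t2 vt1 ut1 ut vt.
    Rmap (a,b,c) (fst (Rmap (d,e,f) (g,h,i))) = (s2, u1) \<and> snd (Rmap (d,e,f) (g,h,i)) = v1 \<and>
    Rmap (a,b,c) (d,e,f) = (vt, ut) \<and> Rmap vt (fst (Rmap ut (g,h,i))) = (t2, vt1) \<and>
    snd (Rmap ut (g,h,i)) = ut1 \<and> s2 = t2 \<and> Rmap u1 v1 = (vt1, ut1)"
proof -
  obtain Xa Ya Za where m1: "mc Xa (d+e) (d+f) (e+i)" "mc Ya (h+f) (g+f) (g+e)" "mc Za (d+h) (g+i) (h+i)"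
    and R1: "Rmap (d,e,f) (g,h,i) = ((g+Xa-Ya, h+Xa-Za, i+Ya-Za),(d-Xa+Ya, e-Xa+Za, f-Ya+Za))"
    using R_char[where a=d and b=e and c=f and d=g and e=h and f=i] by blast
  obtain Xb Yb Zb where m2: "mc Xb (a+b) (a+c) (b+(i+Ya-Za))" "mc Yb ((h+Xa-Za)+c) ((g+Xa-Ya)+c) ((g+Xa-Ya)+b)"
     "mc Zb (a+(h+Xa-Za)) ((g+Xa-Ya)+(i+Ya-Za)) ((h+Xa-Za)+(i+Ya-Za))"
    and R2: "Rmap (a,b,c) (g+Xa-Ya, h+Xa-Za, i+Ya-Za) = (((g+Xa-Ya)+Xb-Yb, (h+Xa-Za)+Xb-Zb, (i+Ya-Za)+Yb-Zb),(a-Xb+Yb, b-Xb+Zb, c-Yb+Zb))"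
    using R_char[where a=a and b=b and c=c and d="g+Xa-Ya" and e="h+Xa-Za" and f="i+Ya-Za"] by blast
  obtain Xc Yc Zc where m3: "mc Xc (a+b) (a+c) (b+f)" "mc Yc (e+c) (d+c) (d+b)" "mc Zc (a+e) (d+f) (e+f)"
    and R3: "Rmap (a,b,c) (d,e,f) = ((d+Xc-Yc, e+Xc-Zc, f+Yc-Zc),(a-Xc+Yc, b-Xc+Zc, c-Yc+Zc))"
    using R_char[where a=a and b=b and c=c and d=d and e=e and f=f] by blast
  define a4 b4 c4 where "a4 = a-Xc+Yc" "b4 = b-Xc+Zc" "c4 = c-Yc+Zc"
  obtain Xd Yd Zd where m4: "mc Xd (a4+b4) (a4+c4) (b4+i)" "mc Yd (h+c4) (g+c4) (g+b4)" "mc Zd (a4+h) (g+i) (h+i)"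
    and R4: "Rmap (a4,b4,c4) (g,h,i) = ((g+Xd-Yd, h+Xd-Zd, i+Yd-Zd),(a4-Xd+Yd, b4-Xd+Zd, c4-Yd+Zd))"
    using R_char[where a=a4 and b=b4 and c=c4 and d=g and e=h and f=i] by blast
  define a5 b5 c5 d5 e5 f5 where "a5 = d+Xc-Yc" "b5 = e+Xc-Zc" "c5 = f+Yc-Zc"
    "d5 = g+Xd-Yd" "e5 = h+Xd-Zd" "f5 = i+Yd-Zd"
  obtain Xe Ye Ze where m5: "mc Xe (a5+b5) (a5+c5) (b5+f5)" "mc Ye (e5+c5) (d5+c5) (d5+b5)" "mc Ze (a5+e5) (d5+f5) (e5+f5)"
    and R5: "Rmap (a5,b5,c5) (d5,e5,f5) = ((d5+Xe-Ye, e5+Xe-Ze, f5+Ye-Ze),(a5-Xe+Ye, b5-Xe+Ze, c5-Ye+Ze))"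
    using R_char[where a=a5 and b=b5 and c=c5 and d=d5 and e=e5 and f=f5] by blast
  define a6 b6 c6 d6 e6 f6 where "a6 = a-Xb+Yb" "b6 = b-Xb+Zb" "c6 = c-Yb+Zb"
    "d6 = d-Xa+Ya" "e6 = e-Xa+Za" "f6 = f-Ya+Za"
  obtain Xf Yf Zf where m6: "mc Xf (a6+b6) (a6+c6) (b6+f6)" "mc Yf (e6+c6) (d6+c6) (d6+b6)" "mc Zf (a6+e6) (d6+f6) (e6+f6)"
    and R6: "Rmap (a6,b6,c6) (d6,e6,f6) = ((d6+Xf-Yf, e6+Xf-Zf, f6+Yf-Zf),(a6-Xf+Yf, b6-Xf+Zf, c6-Yf+Zf))"
    using R_char[where a=a6 and b=b6 and c=c6 and d=d6 and e=e6 and f=f6] by blast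
  note defs = a4_b4_c4_def a5_b5_c5_d5_e5_f5_def a6_b6_c6_d6_e6_f6_def
  have nXa: "mc Xa (d + e) (d + f) (e + i)"
    by (rule mc_cong[OF m1(1)]) (simp_all add: defs algebra_simps)
  have nYa: "mc Ya (f + h) (f + g) (e + g)"
    by (rule mc_cong[OF m1(2)]) (simp_all add: defs algebra_simps)
  have nZa: "mc Za (d + h) (g + i) (h + i)"
    by (rule mc_cong[OF m1(3)]) (simp_all add: defs algebra_simps)
  have nXb: "mc Xb (a + b) (a + c) (Ya - Za + b + i)"
    by (rule mc_cong[OF m2(1)]) (simp_all add: defs algebra_simps)
  have nYb: "mc Yb (Xa - Za + c + h) (Xa - Ya + c + g) (Xa - Ya + b + g)"
    by (rule mc_cong[OF m2(2)]) (simp_all add: defs algebra_simps)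
  have nZb: "mc Zb (Xa - Za + a + h) (Xa - Za + g + i) (Xa + Ya - 2*Za + h + i)"
    by (rule mc_cong[OF m2(3)]) (simp_all add: defs algebra_simps)
  have nXc: "mc Xc (a + b) (a + c) (b + f)"
    by (rule mc_cong[OF m3(1)]) (simp_all add: defs algebra_simps)
  have nYc: "mc Yc (c + e) (c + d) (b + d)"
    by (rule mc_cong[OF m3(2)]) (simp_all add: defs algebra_simps)
  have nZc: "mc Zc (a + e) (d + f) (e + f)"
    by (rule mc_cong[OF m3(3)]) (simp_all add: defs algebra_simps)
  have nXd: "mc Xd (-2*Xc + Yc + Zc + a + b) (-Xc + Zc + a + c) (-Xc + Zc + b + i)"
    by (rule mc_cong[OF m4(1)]) (simp_all add: defs algebra_simps)
  have nYd: "mc Yd (-Yc + Zc + c + h) (-Yc + Zc + c + g) (-Xc + Zc + b + g)"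
    by (rule mc_cong[OF m4(2)]) (simp_all add: defs algebra_simps)
  have nZd: "mc Zd (-Xc + Yc + a + h) (g + i) (h + i)"
    by (rule mc_cong[OF m4(3)]) (simp_all add: defs algebra_simps)
  have nXe: "mc Xe (2*Xc - Yc - Zc + d + e) (Xc - Zc + d + f) (Xc + Yd - Zc - Zd + e + i)"
    by (rule mc_cong[OF m5(1)]) (simp_all add: defs algebra_simps)
  have nYe: "mc Ye (Xd + Yc - Zc - Zd + f + h) (Xd + Yc - Yd - Zc + f + g) (Xc + Xd - Yd - Zc + e + g)"
    by (rule mc_cong[OF m5(2)]) (simp_all add: defs algebra_simps)
  have nZe: "mc Ze (Xc + Xd - Yc - Zd + d + h) (Xd - Zd + g + i) (Xd + Yd - 2*Zd + h + i)"
    by (rule mc_cong[OF m5(3)]) (simp_all add: defs algebra_simps)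
  have nXf: "mc Xf (-2*Xb + Yb + Zb + a + b) (-Xb + Zb + a + c) (-Xb - Ya + Za + Zb + b + f)"
    by (rule mc_cong[OF m6(1)]) (simp_all add: defs algebra_simps)
  have nYf: "mc Yf (-Xa - Yb + Za + Zb + c + e) (-Xa + Ya - Yb + Zb + c + d) (-Xa - Xb + Ya + Zb + b + d)"
    by (rule mc_cong[OF m6(2)]) (simp_all add: defs algebra_simps)
  have nZf: "mc Zf (-Xa - Xb + Yb + Za + a + e) (-Xa + Za + d + f) (-Xa - Ya + 2*Za + e + f)"
    by (rule mc_cong[OF m6(3)]) (simp_all add: defs algebra_simps)
  have c_s2e: "Xa + Xb - Xd - Xe - Za - Zb + Zd + Ze = 0" by (rule F_s2e[OF nXa nYa nZa nXb nZb nXc nYc nZc nXd nYd nZd nXe nZe])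
  have c_s2f: "Ya + Yb - Yd - Ye - Za - Zb + Zd + Ze = 0" by (rule F_s2f[OF nXa nYa nZa nYb nZb nXc nYc nZc nXd nYd nZd nYe nZe])
  have c_we: "-Xa - Xc + Xe + Xf + Za + Zc - Ze - Zf = 0" by (rule F_we[OF nXa nYa nZa nXb nYb nZb nXc nYc nZc nXd nYd nZd nXe nZe nXf nZf])
  have c_wf: "-Ya - Yc + Ye + Yf + Za + Zc - Ze - Zf = 0" by (rule F_wf[OF nXa nYa nZa nXb nYb nZb nXc nYc nZc nXd nYd nZd nYe nZe nYf nZf])
  have g1: "(h+Xa-Za)+Xb-Zb = e5+Xe-Ze" using c_s2e unfolding defs by linarith
  have g2: "(i+Ya-Za)+Yb-Zb = f5+Ye-Ze" using c_s2f unfolding defs by linarith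
  have g3: "e6+Xf-Zf = b5-Xe+Ze" using c_we unfolding defs by linarith
  have g4: "f6+Yf-Zf = c5-Ye+Ze" using c_wf unfolding defs by linarith
  show ?thesis
    apply (rule exI[of _ "((g+Xa-Ya)+Xb-Yb, (h+Xa-Za)+Xb-Zb, (i+Ya-Za)+Yb-Zb)"])
    apply (rule exI[of _ "(a6,b6,c6)"])
    apply (rule exI[of _ "(d6,e6,f6)"])
    apply (rule exI[of _ "(d5+Xe-Ye, e5+Xe-Ze, f5+Ye-Ze)"])
    apply (rule exI[of _ "(a5-Xe+Ye, b5-Xe+Ze, c5-Ye+Ze)"])
    apply (rule exI[of _ "(a4-Xd+Yd, b4-Xd+Zd, c4-Yd+Zd)"])
    apply (rule exI[of _ "(a4,b4,c4)"])
    apply (rule exI[of _ "(a5,b5,c5)"])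
    using R1 R2 R3 R4 R5 R6 g1 g2 g3 g4 unfolding defs
    by (auto simp: algebra_simps)
qed

lemma yb_all:
  fixes u v s :: triple
  shows "fst (Rmap u (fst (Rmap v s))) = fst (Rmap (fst (Rmap u v)) (fst (Rmap (snd (Rmap u v)) s))) \<and>
    snd (Rmap (snd (Rmap u (fst (Rmap v s)))) (snd (Rmap v s))) = snd (Rmap (snd (Rmap u v)) s) \<and>
    fst (Rmap (snd (Rmap u (fst (Rmap v s)))) (snd (Rmap v s))) = snd (Rmap (fst (Rmap u v)) (fst (Rmap (snd (Rmap u v)) s)))"
proof -
  obtain a b c where u: "u = (a,b,c)" by (cases u) auto
  obtain d e f where v: "v = (d,e,f)" by (cases v) auto
  obtain g h i where s: "s = (g,h,i)" by (cases s) auto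
  obtain s2 u1 v1 t2 vt1 ut1 ut vt where
    H: "Rmap (a,b,c) (fst (Rmap (d,e,f) (g,h,i))) = (s2, u1)" "snd (Rmap (d,e,f) (g,h,i)) = v1"
    "Rmap (a,b,c) (d,e,f) = (vt, ut)" "Rmap vt (fst (Rmap ut (g,h,i))) = (t2, vt1)"
    "snd (Rmap ut (g,h,i)) = ut1" "s2 = t2" "Rmap u1 v1 = (vt1, ut1)"
    using yb_core[of a b c d e f g h i] by blast
  show ?thesis unfolding u v s using H by simp
qed

lemma yb1:
  fixes u v s :: triple
  shows "fst (Rmap u (fst (Rmap v s))) = fst (Rmap (fst (Rmap u v)) (fst (Rmap (snd (Rmap u v)) s)))"
  using yb_all by blast
lemma yb2:
  fixes u v s :: triple
  shows "snd (Rmap (snd (Rmap u (fst (Rmap v s)))) (snd (Rmap v s))) = snd (Rmap (snd (Rmap u v)) s)"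
  using yb_all by blast
lemma yb3:
  fixes u v s :: triple
  shows "fst (Rmap (snd (Rmap u (fst (Rmap v s)))) (snd (Rmap v s))) = snd (Rmap (fst (Rmap u v)) (fst (Rmap (snd (Rmap u v)) s)))"
  using yb_all by blast

lemma Tp_comm:
  assumes "k \<ge> 0" "l \<ge> 0"
  shows "Tp k M (Tp l M S) = Tp l M (Tp k M S)"
proof -
  define v where "v = carrier_at l S M"
  define u where "u = carrier_at k (Tp l M S) M"
  define ut where "ut = carrier_at k S M"
  define vt where "vt = carrier_at l (Tp k M S) M"
  have inv: "Rmap (u n) (v n) = (vt n, ut n)" for n
  proof (induction n)
    case 0 then show ?case using R_00[OF assms] by (simp add: u_def v_def ut_def vt_def)
  next
    case (Suc n)
    have a1: "Tp l M S (M + int n) = fst (Rmap (v n) (S (M + int n)))"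
      by (simp add: Tp_def v_def)
    have a2: "Tp k M S (M + int n) = fst (Rmap (ut n) (S (M + int n)))"
      by (simp add: Tp_def ut_def)
    have eu: "u (Suc n) = snd (Rmap (u n) (fst (Rmap (v n) (S (M + int n)))))"
      using a1 by (simp add: u_def)
    have ev: "v (Suc n) = snd (Rmap (v n) (S (M + int n)))" by (simp add: v_def)
    have eut: "ut (Suc n) = snd (Rmap (ut n) (S (M + int n)))" by (simp add: ut_def)
    have evt: "vt (Suc n) = snd (Rmap (vt n) (fst (Rmap (ut n) (S (M + int n)))))"
      using a2 by (simp add: vt_def)
    have vtn: "vt n = fst (Rmap (u n) (v n))" and utn: "ut n = snd (Rmap (u n) (v n))"
      using Suc.IH by auto
    have "fst (Rmap (u (Suc n)) (v (Suc n))) = vt (Suc n)"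
      unfolding eu ev evt vtn utn by (rule yb3)
    moreover have "snd (Rmap (u (Suc n)) (v (Suc n))) = ut (Suc n)"
      unfolding eu ev eut utn by (rule yb2)
    ultimately show ?case by (metis prod.collapse)
  qed
  show ?thesis
  proof
    fix i
    show "Tp k M (Tp l M S) i = Tp l M (Tp k M S) i"
    proof (cases "i < M")
      case True then show ?thesis by (simp add: Tp_def)
    next
      case False
      define n where "n = nat (i - M)"
      have L: "Tp k M (Tp l M S) i = fst (Rmap (u n) (fst (Rmap (v n) (S i))))"
        using False by (simp add: Tp_def u_def v_def n_def)
      have R: "Tp l M (Tp k M S) i = fst (Rmap (vt n) (fst (Rmap (ut n) (S i))))"
        using False by (simp add: Tp_def ut_def vt_def n_def)
      have vtn: "vt n = fst (Rmap (u n) (v n))" and utn: "ut n = snd (Rmap (u n) (v n))"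
        using inv[of n] by auto
      show ?thesis unfolding L R vtn utn by (rule yb1)
    qed
  qed
qed

lemma lb_exists:
  assumes "is_state S" shows "\<exists>N. \<forall>i<N. S i = vac"
proof -
  have fin: "finite {i. S i \<noteq> vac}" using assms by (simp add: is_state_def)
  obtain B where "\<forall>x\<in>{i. S i \<noteq> vac}. B \<le> x"
    using finite_has_minimal fin
    by (metis (no_types, lifting) bdd_below_def bdd_below_finite )
  then have "\<forall>i<B. S i = vac" by force
  then show ?thesis by blast
qed

lemma lb_prop: "\<exists>N. \<forall>i<N. S i = vac \<Longrightarrow> \<forall>i<left_bound S. S i = vac"
  unfolding left_bound_def by (rule someI_ex)

lemma T_Tp: "T l S = Tp l (left_bound S) S"
  by (simp add: T_def Tp_def Let_def)

theorem mainTheorem8: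
  fixes k l :: int and S :: "int \<Rightarrow> triple"
  assumes "k \<ge> 1" and "l \<ge> 1" and "is_state S"
  shows "T k (T l S) = T l (T k S)"
proof -
  have k0: "k \<ge> 0" and l0: "l \<ge> 0" using assms by auto
  define N0 where "N0 = left_bound S"
  have P0: "\<forall>i<N0. S i = vac" unfolding N0_def by (rule lb_prop[OF lb_exists[OF assms(3)]])
  have vl: "\<forall>i<N0. T l S i = vac" using P0 by (simp add: T_Tp Tp_def N0_def)
  have vk: "\<forall>i<N0. T k S i = vac" using P0 by (simp add: T_Tp Tp_def N0_def)
  define N1 where "N1 = left_bound (T l S)"
  define N2 where "N2 = left_bound (T k S)"
  have P1: "\<forall>i<N1. T l S i = vac" unfolding N1_def by (rule lb_prop) (use vl in blast)
  have P2: "\<forall>i<N2. T k S i = vac" unfolding N2_def by (rule lb_prop) (use vk in blast)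
  define M where "M = min N0 (min N1 N2)"
  have "T l S = Tp l M S"
    using Tp_shift[OF l0 P0, of M] by (simp add: T_Tp M_def N0_def)
  moreover have "T k S = Tp k M S"
    using Tp_shift[OF k0 P0, of M] by (simp add: T_Tp M_def N0_def)
  moreover have "T k (T l S) = Tp k M (T l S)"
    using Tp_shift[OF k0 P1, of M] by (simp add: T_Tp M_def N1_def)
  moreover have "T l (T k S) = Tp l M (T k S)"
    using Tp_shift[OF l0 P2, of M] by (simp add: T_Tp M_def N2_def)
  ultimately show ?thesis using Tp_comm[OF k0 l0] by simp
qed
end
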